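(* For every $k\in\mathbb{C}$ with $0<|k|<1$, \[\mathrm{m}\!\left(\frac{4}{k^2}+x+\frac1x+y+\frac1y\right)=\mathrm{m}\!\left(2\left(k+\frac1k\right)+x+\frac1x+y+\frac1y\right)+\mathrm{m}\!\left(2i\left(k-\frac1k\right)+x+\frac1x+y+\frac1y\right).\] Equivalently, with $\mu(t)=\mathrm{m}\!\left(\frac{4}{\sqrt t}+x+\frac1x+y+\frac1y\right)$, $\mu\!\left(\frac{4k^2}{(1+k^2)^2}\right)+\mu\!\left(\frac{-4k^2}{(1-k^2)^2}\right)=\mu(k^4)$.
   Context: $\mathrm{m}(P)=\int_0^1\int_0^1\log|P(e^{2\pi i\theta_1},e^{2\pi i\theta_2})|\,d\theta_1d\theta_2$ is the logarithmic Mahler measure of a Laurent polynomial with complex coefficients. *)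

theory Defs
  imports "HOL-Analysis.Analysis"
begin

definition mahler2 :: "(complex \<Rightarrow> complex \<Rightarrow> complex) \<Rightarrow> real" where
  "mahler2 P = (LINT t : {0..1} \<times> {0..1} | lborel.
      ln (cmod (P (exp (2 * of_real pi * \<i> * of_real (fst t)))
                   (exp (2 * of_real pi * \<i> * of_real (snd t))))))"

definition Pk :: "complex \<Rightarrow> complex \<Rightarrow> complex \<Rightarrow> complex" where
  "Pk c x y = c + x + 1 / x + y + 1 / y"

end

theory Submission
  imports Defs "HOL-Complex_Analysis.Complex_Analysis"
begin

definition Tr :: "real \<times> real \<Rightarrow> real" where
  "Tr p = 2 * cos (2 * pi * fst p) + 2 * cos (2 * pi * snd p)"

definition Omega :: "complex set" where
  "Omega = - (complex_of_real ` {-4..4})"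

lemma Tr_bound: "\<bar>Tr p\<bar> \<le> 4"
  unfolding Tr_def using abs_cos_le_one[of "2 * pi * fst p"] abs_cos_le_one[of "2 * pi * snd p"]
  by linarith

lemma continuous_Tr [continuous_intros]: "continuous_on S Tr"
  unfolding Tr_def by (intro continuous_intros)

lemma Omega_nz: "c \<in> Omega \<Longrightarrow> \<bar>r\<bar> \<le> 4 \<Longrightarrow> c + complex_of_real r \<noteq> 0"
proof
  assume "c \<in> Omega" "\<bar>r\<bar> \<le> 4" "c + complex_of_real r = 0"
  then have "c = complex_of_real (-r)" by (simp add: eq_neg_iff_add_eq_0)
  moreover have "-r \<in> {-4..4}" using \<open>\<bar>r\<bar> \<le> 4\<close> by auto
  ultimately show False using \<open>c \<in> Omega\<close> unfolding Omega_def by auto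
qed

lemma exp_plus_inv: "exp (\<i> * complex_of_real t) + 1 / exp (\<i> * complex_of_real t) = complex_of_real (2 * cos t)"
proof -
  have "cos (complex_of_real t) = (exp (\<i> * complex_of_real t) + exp (- (\<i> * complex_of_real t))) / 2"
    by (simp add: cos_exp_eq)
  then show ?thesis by (simp add: exp_minus cos_of_real field_simps)
qed

lemma Pk_torus: "Pk c (exp (2 * of_real pi * \<i> * of_real s)) (exp (2 * of_real pi * \<i> * of_real t))
   = c + complex_of_real (Tr (s, t))"
proof -
  have e: "\<And>x. 2 * of_real pi * \<i> * of_real x = \<i> * complex_of_real (2 * pi * x)" by simp
  show ?thesis unfolding Pk_def Tr_def e
    using exp_plus_inv[of "2 * pi * s"] exp_plus_inv[of "2 * pi * t"] by (simp add: algebra_simps)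
qed

lemma mahler_integral:
  assumes "c \<in> Omega"
  shows "mahler2 (Pk c) = integral (cbox (0,0) (1,1)) (\<lambda>p. ln (cmod (c + complex_of_real (Tr p))))"
proof -
  have box: "{0..1::real} \<times> {0..1::real} = cbox (0,0) (1,1)"
    by (simp add: cbox_Pair_eq)
  have cont: "continuous_on (cbox (0,0) (1,1)) (\<lambda>p. ln (cmod (c + complex_of_real (Tr p))))"
    using Omega_nz[OF assms Tr_bound] by (intro continuous_intros) auto
  have "set_integrable lborel (cbox (0::real,0::real) (1,1)) (\<lambda>p. ln (cmod (c + complex_of_real (Tr p))))"
    unfolding set_integrable_def by (intro borel_integrable_compact cont) auto
  then have "(LINT p : cbox (0,0) (1,1) | lborel. ln (cmod (c + complex_of_real (Tr p))))
      = integral (cbox (0,0) (1,1)) (\<lambda>p. ln (cmod (c + complex_of_real (Tr p))))"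
    by (rule set_borel_integral_eq_integral)
  moreover have "mahler2 (Pk c) = (LINT p : cbox (0,0) (1,1) | lborel. ln (cmod (c + complex_of_real (Tr p))))"
    unfolding mahler2_def box[symmetric] by (simp add: Pk_torus split_beta')
  ultimately show ?thesis by simp
qed

definition Hh :: "complex \<Rightarrow> complex" where
  "Hh c = integral (cbox (0::real,0::real) (1,1)) (\<lambda>p. Ln (1 + complex_of_real (Tr p) / c))"

lemma Omega_nz0: "c \<in> Omega \<Longrightarrow> c \<noteq> 0"
  using Omega_nz[of c 0] by auto

lemma Omega_slit:
  assumes "c \<in> Omega" "\<bar>r\<bar> \<le> 4"
  shows "1 + complex_of_real r / c \<notin> \<real>\<^sub>\<le>\<^sub>0"
proof
  assume "1 + complex_of_real r / c \<in> \<real>\<^sub>\<le>\<^sub>0"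
  then obtain s where s: "s \<le> 0" "1 + complex_of_real r / c = complex_of_real s"
    by (auto elim!: nonpos_Reals_cases)
  have c0: "c \<noteq> 0" using Omega_nz0 assms by auto
  have "complex_of_real r = complex_of_real (s - 1) * c"
    using s(2) c0 by (simp add: field_simps)
  then have A: "c = complex_of_real (r / (s - 1))" using s(1)
    by (simp add: field_simps)
  have "\<bar>r / (s - 1)\<bar> \<le> 4"
  proof -
    have "\<bar>s - 1\<bar> \<ge> 1" using s(1) by auto
    then have "\<bar>r\<bar> / \<bar>s - 1\<bar> \<le> \<bar>r\<bar>" by (simp add: divide_le_eq_1 field_simps mult_le_cancel_left1) 
    then show ?thesis using assms(2) by (simp add: abs_divide)
  qed
  then have "r / (s - 1) \<in> {-4..4}" by (metis abs_le_iff atLeastAtMost_iff minus_le_iff)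
  from image_eqI[where f=complex_of_real, OF A this] have "c \<in> complex_of_real ` {-4..4}" .
  then show False using assms(1) unfolding Omega_def by auto
qed

lemma ln_split:
  assumes "c \<in> Omega" "\<bar>r\<bar> \<le> 4"
  shows "ln (cmod (c + complex_of_real r)) = ln (cmod c) + Re (Ln (1 + complex_of_real r / c))"
proof -
  have c0: "c \<noteq> 0" using Omega_nz0 assms by auto
  have nz: "1 + complex_of_real r / c \<noteq> 0" using Omega_slit[OF assms] by auto
  have "c + complex_of_real r = c * (1 + complex_of_real r / c)" using c0 by (simp add: field_simps)
  then have "cmod (c + complex_of_real r) = cmod c * cmod (1 + complex_of_real r / c)"
    by (simp add: norm_mult)
  then show ?thesis using c0 nz by (simp add: ln_mult Re_Ln)
qed

lemma open_Omega: "open Omega"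
proof -
  have "compact (complex_of_real ` {-4..4})"
    by (intro compact_continuous_image continuous_intros) auto
  then show ?thesis unfolding Omega_def by (intro open_Compl compact_imp_closed)
qed

lemma cont_Ln_int:
  assumes "c \<in> Omega"
  shows "continuous_on S (\<lambda>p. Ln (1 + complex_of_real (Tr p) / c))"
  using Omega_slit[OF assms Tr_bound] Omega_nz0[OF assms] by (intro continuous_intros) auto

lemma mahler_Hh:
  assumes "c \<in> Omega"
  shows "mahler2 (Pk c) = ln (cmod c) + Re (Hh c)"
proof -
  let ?B = "cbox (0::real,0::real) (1,1)"
  have int: "(\<lambda>p. Ln (1 + complex_of_real (Tr p) / c)) integrable_on ?B"
    by (intro integrable_continuous cont_Ln_int assms)
  have "integral ?B (\<lambda>p. ln (cmod (c + complex_of_real (Tr p))))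
      = integral ?B (\<lambda>p. ln (cmod c) + Re (Ln (1 + complex_of_real (Tr p) / c)))"
    using ln_split[OF assms Tr_bound] by simp
  also have "\<dots> = integral ?B (\<lambda>p. ln (cmod c)) + integral ?B (Re \<circ> (\<lambda>p. Ln (1 + complex_of_real (Tr p) / c)))"
    by (subst integral_add) (auto simp: o_def intro!: integrable_continuous continuous_intros cont_Ln_int assms)
  also have "\<dots> = ln (cmod c) + Re (Hh c)"
    unfolding Hh_def by (subst integral_linear[OF int bounded_linear_Re]) (simp add: content_Pair)
  finally show ?thesis using mahler_integral[OF assms] by simp
qed

lemma Hh_holo: "Hh holomorphic_on Omega"
proof -
  have "Hh field_differentiable (at c)" if c: "c \<in> Omega" for c
  proof -
    obtain e where e: "e > 0" "ball c e \<subseteq> Omega" using open_Omega c open_contains_ball by blast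
    have "(\<lambda>x. integral (cbox (0::real,0::real) (1,1)) (\<lambda>p. Ln (1 + complex_of_real (Tr p) / x))) holomorphic_on ball c e"
    proof (rule leibniz_rule_holomorphic[where fx = "\<lambda>x p. - complex_of_real (Tr p) / (x * (x + complex_of_real (Tr p)))"])
      fix x :: complex and t :: "real \<times> real"
      assume x: "x \<in> ball c e"
      then have xO: "x \<in> Omega" using e by auto
      have x0: "x \<noteq> 0" using Omega_nz0 xO by auto
      have xT: "x + complex_of_real (Tr t) \<noteq> 0" using Omega_nz[OF xO Tr_bound] .
      have sl: "1 + complex_of_real (Tr t) / x \<notin> \<real>\<^sub>\<le>\<^sub>0" using Omega_slit[OF xO Tr_bound] .
      have "((\<lambda>x. Ln (1 + complex_of_real (Tr t) / x)) has_field_derivative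
              inverse (1 + complex_of_real (Tr t) / x) * (- complex_of_real (Tr t) / x^2)) (at x)"
        using sl x0 by (auto intro!: derivative_eq_intros has_field_derivative_Ln[THEN DERIV_chain2] simp: power2_eq_square)
      moreover have "inverse (1 + complex_of_real (Tr t) / x) * (- complex_of_real (Tr t) / x^2)
          = - complex_of_real (Tr t) / (x * (x + complex_of_real (Tr t)))"
      proof -
        have "x * x + x * complex_of_real (Tr t) \<noteq> 0" using x0 xT by (metis distrib_left mult_eq_0_iff)
        have "1 + complex_of_real (Tr t) / x = (x + complex_of_real (Tr t)) / x" using x0 by (simp add: field_simps)
        then have "inverse (1 + complex_of_real (Tr t) / x) = x / (x + complex_of_real (Tr t))" by simp
        then show ?thesis using x0 xT by (simp add: power2_eq_square)
      qed
      ultimately show "((\<lambda>x. Ln (1 + complex_of_real (Tr t) / x)) has_field_derivative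
              - complex_of_real (Tr t) / (x * (x + complex_of_real (Tr t)))) (at x within ball c e)"
        by (simp add: has_field_derivative_at_within)
    next
      fix x assume x: "x \<in> ball c e"
      then have xO: "x \<in> Omega" using e by auto
      show "(\<lambda>p. Ln (1 + complex_of_real (Tr p) / x)) integrable_on cbox (0, 0) (1, 1)"
        by (intro integrable_continuous cont_Ln_int xO)
    next
      have "\<And>z. z \<in> ball c e \<times> cbox (0::real,0::real) (1,1) \<Longrightarrow> fst z * (fst z + complex_of_real (Tr (snd z))) \<noteq> 0"
      proof -
        fix z :: "complex \<times> real \<times> real" assume "z \<in> ball c e \<times> cbox (0,0) (1,1)"
        then have xO: "fst z \<in> Omega" using e by auto
        show "fst z * (fst z + complex_of_real (Tr (snd z))) \<noteq> 0"
          using Omega_nz0[OF xO] Omega_nz[OF xO Tr_bound] by simp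
      qed
      then show "continuous_on (ball c e \<times> cbox (0::real,0::real) (1,1))
          (\<lambda>(x, t). - complex_of_real (Tr t) / (x * (x + complex_of_real (Tr t))))"
        unfolding case_prod_beta by (intro continuous_intros continuous_on_compose2[OF continuous_Tr]) auto
    qed auto
    then have "Hh holomorphic_on ball c e" unfolding Hh_def .
    then show ?thesis using e by (intro holomorphic_on_imp_differentiable_at) auto
  qed
  then show ?thesis by (simp add: holomorphic_on_def field_differentiable_at_within)
qed

lemma central_rec: "Suc n * ((2 * Suc n) choose Suc n) = 2 * (2 * n + 1) * ((2 * n) choose n)"
proof -
  have a: "Suc n * (Suc (Suc (2*n)) choose Suc n) = Suc (Suc (2*n)) * (Suc (2*n) choose n)"
    by (rule Suc_times_binomial)
  have b: "Suc (2*n) * ((2*n) choose n) = (Suc (2*n) choose Suc n) * Suc n"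
    by (rule Suc_times_binomial_eq)
  have c: "(Suc (2*n) choose Suc n) = (Suc (2*n) choose n)"
    using binomial_symmetric[of "Suc n" "Suc (2*n)"] by simp
  have "Suc n * ((2 * Suc n) choose Suc n) = 2 * (Suc n * (Suc (2*n) choose n))"
    using a by simp
  also have "\<dots> = 2 * (Suc (2*n) * ((2*n) choose n))" using b c by (simp add: mult.commute)
  finally show ?thesis by simp
qed

definition acoef :: "nat \<Rightarrow> complex" where
  "acoef m = of_nat (((2 * m) choose m)^2)"

definition FF :: "complex fps" where "FF = Abs_fps acoef"
definition hF :: "complex fps" where
  "hF = Abs_fps (\<lambda>m. if m = 0 then 0 else acoef m / (2 * of_nat m))"

lemma acoef_rec: "of_nat (Suc n)^2 * acoef (Suc n) = 4 * of_nat (2 * n + 1)^2 * acoef n"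
proof -
  have "(Suc n * ((2 * Suc n) choose Suc n))^2 = (2 * (2 * n + 1) * ((2 * n) choose n))^2"
    by (simp only: central_rec)
  then have N: "Suc n ^ 2 * ((2 * Suc n) choose Suc n)^2 = 4 * (2 * n + 1)^2 * ((2 * n) choose n)^2"
    by (simp only: power_mult_distrib) simp
  have "of_nat (Suc n ^ 2 * ((2 * Suc n) choose Suc n)^2) = (of_nat (4 * (2 * n + 1)^2 * ((2 * n) choose n)^2) :: complex)"
    using N by (simp only:)
  then show ?thesis unfolding acoef_def by (simp only: of_nat_mult of_nat_power of_nat_numeral)
qed

lemma acoef0 [simp]: "acoef 0 = 1" by (simp add: acoef_def)

lemma ofnat_Suc_nz: "(of_nat (Suc m) :: complex) \<noteq> 0"
  by (simp only: of_nat_eq_0_iff)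

lemma hF_rel: "FF - 1 = 2 * fps_X * fps_deriv hF"
proof (rule fps_ext)
  fix n
  show "(FF - 1) $ n = (2 * fps_X * fps_deriv hF) $ n"
  proof (cases n)
    case 0 then show ?thesis by (simp add: FF_def hF_def mult.assoc fps_numeral_fps_const)
  next
    case (Suc m)
    have "(2 * fps_X * fps_deriv hF) $ n = 2 * (of_nat (Suc m) * (acoef (Suc m) / (2 * of_nat (Suc m))))"
      using Suc by (simp add: hF_def mult.assoc fps_numeral_fps_const del: of_nat_Suc)
    also have "\<dots> = acoef (Suc m)" using ofnat_Suc_nz[of m] by (simp add: field_simps del: of_nat_Suc)
    finally show ?thesis using Suc by (simp add: FF_def)
  qed
qed

lemma nth1: "(fps_X * fps_deriv (fps_deriv FF)) $ n = of_nat n * of_nat (n + 1) * acoef (n + 1)"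
  by (cases n) (auto simp: FF_def)
lemma nth2: "(fps_X^2 * fps_deriv (fps_deriv FF)) $ n = (of_nat n * of_nat n - of_nat n) * acoef n"
proof (cases n)
  case 0 then show ?thesis by (simp add: fps_X_power_mult_nth)
next
  case (Suc m)
  show ?thesis
  proof (cases m)
    case 0 then show ?thesis using Suc by (simp add: fps_X_power_mult_nth)
  next
    case (Suc j)
    have "(fps_X^2 * fps_deriv (fps_deriv FF)) $ n = of_nat (j + 1) * (of_nat (j + 2) * acoef (j + 2))"
      using Suc \<open>n = Suc m\<close> by (simp add: fps_X_power_mult_nth FF_def)
    then show ?thesis using Suc \<open>n = Suc m\<close> by (simp add: algebra_simps)
  qed
qed
lemma nth3: "(fps_X * fps_deriv FF) $ n = of_nat n * acoef n"
  by (cases n) (auto simp: FF_def)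
lemma nth4: "fps_deriv FF $ n = of_nat (n + 1) * acoef (n + 1)"
  by (simp add: FF_def)

lemma FF_ode: "fps_X * (1 - 16 * fps_X) * fps_deriv (fps_deriv FF) + (1 - 32 * fps_X) * fps_deriv FF - 4 * FF = 0"
proof (rule fps_ext)
  fix n
  have e: "fps_X * (1 - 16 * fps_X) * fps_deriv (fps_deriv FF) + (1 - 32 * fps_X) * fps_deriv FF - 4 * FF
     = fps_X * fps_deriv (fps_deriv FF) - fps_const 16 * (fps_X^2 * fps_deriv (fps_deriv FF)) + fps_deriv FF
       - fps_const 32 * (fps_X * fps_deriv FF) - fps_const 4 * FF"
    by (simp add: algebra_simps power2_eq_square fps_numeral_fps_const)
  have "(fps_X * (1 - 16 * fps_X) * fps_deriv (fps_deriv FF) + (1 - 32 * fps_X) * fps_deriv FF - 4 * FF) $ n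
     = of_nat n * of_nat (n + 1) * acoef (n + 1) - 16 * ((of_nat n * of_nat n - of_nat n) * acoef n)
       + of_nat (n + 1) * acoef (n + 1) - 32 * (of_nat n * acoef n) - 4 * acoef n"
    unfolding e by (simp only: fps_sub_nth fps_add_nth fps_mult_left_const_nth nth1 nth2 nth3 nth4) (simp add: FF_def)
  also have "\<dots> = of_nat (Suc n)^2 * acoef (Suc n) - 4 * of_nat (2 * n + 1)^2 * acoef n"
    by (simp add: algebra_simps power2_eq_square)
  also have "\<dots> = 0" using acoef_rec[of n] by simp
  finally show "(fps_X * (1 - 16 * fps_X) * fps_deriv (fps_deriv FF) + (1 - 32 * fps_X) * fps_deriv FF - 4 * FF) $ n = 0 $ n"
    by simp
qed

lemma FF_ode_compose:
  fixes g :: "complex fps"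
  assumes g0: "g $ 0 = 0"
  shows "g * (1 - 16 * g) * (fps_deriv (fps_deriv FF) oo g) + (1 - 32 * g) * (fps_deriv FF oo g) - 4 * (FF oo g) = 0"
proof -
  have "(fps_X * (1 - 16 * fps_X) * fps_deriv (fps_deriv FF) + (1 - 32 * fps_X) * fps_deriv FF - 4 * FF) oo g = 0"
    by (simp add: FF_ode)
  then show ?thesis
    using g0 by (simp add: fps_compose_add_distrib fps_compose_sub_distrib fps_compose_mult_distrib)
qed

definition Lop :: "complex fps \<Rightarrow> complex fps" where
  "Lop Y = (fps_X - fps_X^3) * fps_deriv (fps_deriv Y) + (1 - 3 * fps_X^2) * fps_deriv Y - fps_X * Y"

lemma ode_transfer:
  fixes g r :: "complex fps"
  assumes g0: "g $ 0 = 0" and gnz: "g \<noteq> 0"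
  assumes al: "4 * (fps_X - fps_X^3) * r * (fps_deriv g)^2 + g * (1 - 16 * g) *
      ((fps_X - fps_X^3) * fps_deriv (fps_deriv r) + (1 - 3 * fps_X^2) * fps_deriv r - fps_X * r) = 0"
  assumes be: "- (fps_X - fps_X^3) * r * (fps_deriv g)^2 * (1 - 32 * g) + g * (1 - 16 * g) *
      (2 * (fps_X - fps_X^3) * fps_deriv r * fps_deriv g + (fps_X - fps_X^3) * r * fps_deriv (fps_deriv g)
       + (1 - 3 * fps_X^2) * r * fps_deriv g) = 0"
  shows "Lop (r * (FF oo g)) = 0"
proof -
  define A where "A = FF oo g"
  define B where "B = fps_deriv FF oo g"
  define C where "C = fps_deriv (fps_deriv FF) oo g"
  have ode: "g * (1 - 16 * g) * C + (1 - 32 * g) * B - 4 * A = 0"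
    unfolding A_def B_def C_def by (rule FF_ode_compose[OF g0])
  have dA: "fps_deriv A = B * fps_deriv g" unfolding A_def B_def by (rule fps_compose_deriv[OF g0])
  have dB: "fps_deriv B = C * fps_deriv g" unfolding C_def B_def by (rule fps_compose_deriv[OF g0])
  have L: "Lop (r * A) = (fps_X - fps_X^3) * (fps_deriv (fps_deriv r) * A + 2 * fps_deriv r * B * fps_deriv g
            + r * C * (fps_deriv g)^2 + r * B * fps_deriv (fps_deriv g))
        + (1 - 3 * fps_X^2) * (fps_deriv r * A + r * B * fps_deriv g) - fps_X * (r * A)"
    unfolding Lop_def by (simp add: fps_deriv_mult dA dB algebra_simps power2_eq_square)
  have "g * (1 - 16 * g) * Lop (r * A) = 0"
    unfolding L using ode al be by algebra
  moreover have "g * (1 - 16 * g) \<noteq> 0"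
  proof -
    have "(1 - 16 * g) $ 0 = 1" using g0 by (simp add: fps_numeral_fps_const)
    then have "1 - 16 * g \<noteq> 0" by (metis fps_zero_nth zero_neq_one)
    then show ?thesis using gnz by simp
  qed
  ultimately show ?thesis unfolding A_def by simp
qed

lemma Lop_nth:
  fixes D :: "complex fps"
  shows "Lop D $ n = of_nat (n + 1)^2 * D $ (n + 1) - (if n = 0 then 0 else of_nat n ^ 2 * D $ (n - 1))"
proof -
  have e: "Lop D = fps_X * fps_deriv (fps_deriv D) - fps_X^3 * fps_deriv (fps_deriv D) + fps_deriv D
      - fps_const 3 * (fps_X^2 * fps_deriv D) - fps_X * D"
    unfolding Lop_def by (simp add: algebra_simps fps_numeral_fps_const)
  consider "n = 0" | "n = 1" | "n = 2" | m where "n = Suc (Suc (Suc m))"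
    by (metis One_nat_def Suc_1 not0_implies_Suc)
  then show ?thesis
  proof cases
    case 1 then show ?thesis unfolding e by (simp add: fps_X_power_mult_nth)
  next
    case 2 then show ?thesis unfolding e by (simp add: fps_X_power_mult_nth ; simp add: algebra_simps power2_eq_square)
  next
    case 3 then show ?thesis unfolding e by (simp add: fps_X_power_mult_nth ; simp add: algebra_simps power2_eq_square numeral_3_eq_3)
  next
    case 4 then show ?thesis unfolding e by (simp add: fps_X_power_mult_nth ; simp add: algebra_simps power2_eq_square)
  qed
qed

lemma Lop_diff: "Lop (Y - Z) = Lop Y - Lop Z"
  unfolding Lop_def by (simp add: algebra_simps)

lemma Lop_unique:
  fixes Y Z :: "complex fps"
  assumes "Lop Y = 0" "Lop Z = 0" "Y $ 0 = Z $ 0"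
  shows "Y = Z"
proof -
  define D where "D = Y - Z"
  have L: "Lop D = 0" unfolding D_def Lop_diff using assms by simp
  have D0: "D $ 0 = 0" unfolding D_def using assms by simp
  have rec: "of_nat (n + 1)^2 * D $ (n + 1) = (if n = 0 then 0 else of_nat n ^ 2 * D $ (n - 1))" for n
    using arg_cong[OF L, of "\<lambda>f. f $ n"] unfolding Lop_nth by simp
  have "D $ n = 0" for n
  proof (induction n rule: less_induct)
    case (less n)
    show ?case
    proof (cases n)
      case 0 then show ?thesis using D0 by simp
    next
      case (Suc m)
      have nz: "(of_nat (m + 1) :: complex)^2 \<noteq> 0" by (simp del: of_nat_Suc add: ofnat_Suc_nz)
      show ?thesis
      proof (cases m)
        case 0
        then show ?thesis using rec[of 0] Suc by simp
      next
        case (Suc j)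
        have "D $ (m - 1) = 0" using less Suc \<open>n = Suc m\<close> by simp
        then show ?thesis using rec[of m] nz \<open>n = Suc m\<close> \<open>m = Suc j\<close> by simp
      qed
    qed
  qed
  then have "D = 0" by (simp add: fps_eq_iff)
  then show ?thesis unfolding D_def by simp
qed

definition "c4 = fps_const (1/4 :: complex)"
definition "c16 = fps_const (1/16 :: complex)"
definition "qf = inverse (1 + fps_X :: complex fps)"
definition "pf = inverse (1 - fps_X :: complex fps)"
definition "Wf = c16 * fps_X^2"
definition "Uf = c4 * fps_X * qf^2"
definition "Vf = - c4 * fps_X * pf^2"

lemma c4: "4 * c4 = 1" unfolding c4_def by (simp add: fps_numeral_fps_const)
lemma c16: "16 * c16 = 1" unfolding c16_def by (simp add: fps_numeral_fps_const)
lemma dc4 [simp]: "fps_deriv c4 = 0" unfolding c4_def by simp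
lemma dc16 [simp]: "fps_deriv c16 = 0" unfolding c16_def by simp

lemma qinv: "qf * (1 + fps_X) = 1"
  unfolding qf_def by (rule inverse_mult_eq_1) simp
lemma pinv: "pf * (1 - fps_X) = 1"
  unfolding pf_def by (rule inverse_mult_eq_1) simp
lemma dq: "fps_deriv qf = - (qf^2)"
  unfolding qf_def by (subst fps_inverse_deriv) simp_all
lemma dp: "fps_deriv pf = pf^2"
  unfolding pf_def by (subst fps_inverse_deriv) simp_all
lemma ddq: "fps_deriv (fps_deriv qf) = 2 * qf^3"
  unfolding dq by (simp add: fps_deriv_power dq algebra_simps power2_eq_square power3_eq_cube)
lemma ddp: "fps_deriv (fps_deriv pf) = 2 * pf^3"
  unfolding dp by (simp add: fps_deriv_power dp algebra_simps power2_eq_square power3_eq_cube)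

lemma dU: "fps_deriv Uf = c4 * (qf^2 - 2 * fps_X * qf^3)"
  unfolding Uf_def by (simp add: fps_deriv_power dq algebra_simps power2_eq_square power3_eq_cube)
lemma ddU: "fps_deriv (fps_deriv Uf) = c4 * (6 * fps_X * qf^4 - 4 * qf^3)"
  unfolding dU by (simp add: fps_deriv_power dq algebra_simps power2_eq_square power3_eq_cube eval_nat_numeral)
lemma dV: "fps_deriv Vf = - c4 * (pf^2 + 2 * fps_X * pf^3)"
  unfolding Vf_def by (simp add: fps_deriv_power dp algebra_simps power2_eq_square power3_eq_cube)
lemma ddV: "fps_deriv (fps_deriv Vf) = - c4 * (6 * fps_X * pf^4 + 4 * pf^3)"
  unfolding dV by (simp add: fps_deriv_power dp algebra_simps power2_eq_square power3_eq_cube eval_nat_numeral)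
lemma dW: "fps_deriv Wf = 2 * c16 * fps_X"
  unfolding Wf_def by (simp add: fps_deriv_power algebra_simps)
lemma ddW: "fps_deriv (fps_deriv Wf) = 2 * c16"
  unfolding dW by (simp add: algebra_simps)

lemma Wf0: "Wf $ 0 = 0" unfolding Wf_def by simp
lemma Uf0: "Uf $ 0 = 0" unfolding Uf_def by simp
lemma Vf0: "Vf $ 0 = 0" unfolding Vf_def by simp

lemma Wfnz: "Wf \<noteq> 0"
proof
  assume "Wf = 0"
  then have "16 * Wf = 0" by simp
  then have "fps_X^2 = (0::complex fps)" unfolding Wf_def using c16 by (simp add: mult.assoc[symmetric])
  then show False by simp
qed

lemma qf0: "qf $ 0 = 1" unfolding qf_def by simp
lemma pf0: "pf $ 0 = 1" unfolding pf_def by simp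

lemma Ufnz: "Uf \<noteq> 0"
proof
  assume "Uf = 0"
  moreover have "fps_X = 4 * Uf * (1 + fps_X)^2" using c4 qinv unfolding Uf_def by algebra
  ultimately have "fps_X = (0::complex fps)" by simp
  then show False by simp
qed

lemma Vfnz: "Vf \<noteq> 0"
proof
  assume "Vf = 0"
  moreover have "fps_X = - 4 * Vf * (1 - fps_X)^2" using c4 pinv unfolding Vf_def by algebra
  ultimately have "fps_X = (0::complex fps)" by simp
  then show False by simp
qed

lemma LopW: "Lop (FF oo Wf) = 0"
proof -
  have "Lop (1 * (FF oo Wf)) = 0"
  proof (rule ode_transfer[OF Wf0 Wfnz])
    show "4 * (fps_X - fps_X ^ 3) * 1 * (fps_deriv Wf)\<^sup>2 + Wf * (1 - 16 * Wf) *
      ((fps_X - fps_X ^ 3) * fps_deriv (fps_deriv 1) + (1 - 3 * fps_X\<^sup>2) * fps_deriv 1 - fps_X * 1) = 0"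
      unfolding dW using c16 unfolding Wf_def by simp algebra
    show "- (fps_X - fps_X ^ 3) * 1 * (fps_deriv Wf)\<^sup>2 * (1 - 32 * Wf) + Wf * (1 - 16 * Wf) *
      (2 * (fps_X - fps_X ^ 3) * fps_deriv 1 * fps_deriv Wf + (fps_X - fps_X ^ 3) * 1 * fps_deriv (fps_deriv Wf) +
       (1 - 3 * fps_X\<^sup>2) * 1 * fps_deriv Wf) = 0"
      unfolding ddW dW using c16 unfolding Wf_def by simp algebra
  qed
  then show ?thesis by simp
qed

lemma LopU: "Lop (qf * (FF oo Uf)) = 0"
proof (rule ode_transfer[OF Uf0 Ufnz])
  show "4 * (fps_X - fps_X ^ 3) * qf * (fps_deriv Uf)\<^sup>2 + Uf * (1 - 16 * Uf) *
      ((fps_X - fps_X ^ 3) * fps_deriv (fps_deriv qf) + (1 - 3 * fps_X\<^sup>2) * fps_deriv qf - fps_X * qf) = 0"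
    unfolding dU ddq unfolding dq using c4 qinv unfolding Uf_def by algebra
  show "- (fps_X - fps_X ^ 3) * qf * (fps_deriv Uf)\<^sup>2 * (1 - 32 * Uf) + Uf * (1 - 16 * Uf) *
      (2 * (fps_X - fps_X ^ 3) * fps_deriv qf * fps_deriv Uf + (fps_X - fps_X ^ 3) * qf * fps_deriv (fps_deriv Uf) +
       (1 - 3 * fps_X\<^sup>2) * qf * fps_deriv Uf) = 0"
    unfolding ddU unfolding dU dq using c4 qinv unfolding Uf_def by algebra
qed

lemma LopV: "Lop (pf * (FF oo Vf)) = 0"
proof (rule ode_transfer[OF Vf0 Vfnz])
  show "4 * (fps_X - fps_X ^ 3) * pf * (fps_deriv Vf)\<^sup>2 + Vf * (1 - 16 * Vf) *
      ((fps_X - fps_X ^ 3) * fps_deriv (fps_deriv pf) + (1 - 3 * fps_X\<^sup>2) * fps_deriv pf - fps_X * pf) = 0"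
    unfolding dV ddp unfolding dp using c4 pinv unfolding Vf_def by algebra
  show "- (fps_X - fps_X ^ 3) * pf * (fps_deriv Vf)\<^sup>2 * (1 - 32 * Vf) + Vf * (1 - 16 * Vf) *
      (2 * (fps_X - fps_X ^ 3) * fps_deriv pf * fps_deriv Vf + (fps_X - fps_X ^ 3) * pf * fps_deriv (fps_deriv Vf) +
       (1 - 3 * fps_X\<^sup>2) * pf * fps_deriv Vf) = 0"
    unfolding ddV unfolding dV dp using c4 pinv unfolding Vf_def by algebra
qed

lemma landenU: "FF oo Uf = (1 + fps_X) * (FF oo Wf)"
proof -
  have "qf * (FF oo Uf) = FF oo Wf"
    by (rule Lop_unique[OF LopU LopW]) (simp add: qf0 Uf0 Wf0 FF_def)
  then have "(1 + fps_X) * (qf * (FF oo Uf)) = (1 + fps_X) * (FF oo Wf)" by simp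
  then show ?thesis using qinv by algebra
qed

lemma landenV: "FF oo Vf = (1 - fps_X) * (FF oo Wf)"
proof -
  have "pf * (FF oo Vf) = FF oo Wf"
    by (rule Lop_unique[OF LopV LopW]) (simp add: pf0 Vf0 Wf0 FF_def)
  then have "(1 - fps_X) * (pf * (FF oo Vf)) = (1 - fps_X) * (FF oo Wf)" by simp
  then show ?thesis using pinv by algebra
qed

definition "QF = - (hF oo Wf) + (hF oo Uf) + (hF oo Vf)"

lemma hF_compose:
  fixes g :: "complex fps"
  assumes g0: "g $ 0 = 0"
  shows "(FF oo g) - 1 = 2 * g * (fps_deriv hF oo g)"
proof -
  have "(FF - 1) oo g = (2 * fps_X * fps_deriv hF) oo g" by (simp only: hF_rel)
  then show ?thesis using g0 by (simp add: fps_compose_sub_distrib fps_compose_mult_distrib)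
qed

lemma QF_deriv: "fps_deriv QF = - 2 * fps_X * pf * qf"
proof -
  define hW where "hW = fps_deriv hF oo Wf"
  define hU where "hU = fps_deriv hF oo Uf"
  define hV where "hV = fps_deriv hF oo Vf"
  define P where "P = FF oo Wf"
  have dQ: "fps_deriv QF = - (hW * fps_deriv Wf) + hU * fps_deriv Uf + hV * fps_deriv Vf"
    unfolding QF_def hW_def hU_def hV_def
    by (simp add: fps_compose_deriv Wf0 Uf0 Vf0)
  have eW: "P - 1 = 2 * Wf * hW" unfolding P_def hW_def by (rule hF_compose[OF Wf0])
  have eU: "(1 + fps_X) * P - 1 = 2 * Uf * hU"
    unfolding P_def hU_def landenU[symmetric] by (rule hF_compose[OF Uf0])
  have eV: "(1 - fps_X) * P - 1 = 2 * Vf * hV"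
    unfolding P_def hV_def landenV[symmetric] by (rule hF_compose[OF Vf0])
  have "2 * fps_X * (fps_deriv QF + 2 * fps_X * pf * qf) = 0"
    unfolding dQ dW dU dV using eW eU eV c4 c16 qinv pinv unfolding Wf_def Uf_def Vf_def by algebra
  moreover have "2 * fps_X \<noteq> (0 :: complex fps)" by (simp add: fps_numeral_fps_const)
  ultimately have "fps_deriv QF + 2 * fps_X * pf * qf = 0" by simp
  then show ?thesis by (simp add: algebra_simps eq_neg_iff_add_eq_0)
qed

lemma QF0: "QF $ 0 = 0" unfolding QF_def by (simp add: hF_def)

definition "hfun = eval_fps hF"

lemma hF_bound: "norm (hF $ n) \<le> 16 ^ n"
proof (cases "n = 0")
  case True then show ?thesis by (simp add: hF_def)
next
  case False
  have b: "(2 * n) choose n \<le> 4 ^ n"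
    using binomial_le_pow2[of "2 * n" n] by (simp add: power_mult)
  have "((2 * n) choose n)^2 \<le> (4 ^ n)^2" using b by (simp add: power_mono)
  moreover have "((4::nat) ^ n)^2 = (4^2)^n" by (simp only: power_mult[symmetric] mult.commute)
  ultimately have "((2 * n) choose n)^2 \<le> 16 ^ n" by simp
  then have b2: "real (((2 * n) choose n)^2) \<le> 16 ^ n"
    by (metis of_nat_le_iff of_nat_numeral of_nat_power)
  have "norm (hF $ n) = real (((2 * n) choose n)^2) / (2 * real n)"
    using False by (simp add: hF_def acoef_def norm_divide norm_mult norm_power)
  also have "\<dots> \<le> real (((2 * n) choose n)^2)"
    using False by (simp add: divide_le_eq field_simps)
  also have "\<dots> \<le> 16 ^ n" by (rule b2)
  finally show ?thesis .
qed

lemma hF_radius: "fps_conv_radius hF > 0"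
proof -
  have "summable (\<lambda>n. hF $ n * (1/32) ^ n)"
  proof (rule summable_comparison_test)
    show "\<exists>N. \<forall>n\<ge>N. norm (hF $ n * (1/32) ^ n) \<le> (1/2) ^ n"
    proof (intro exI allI impI)
      fix n :: nat
      have "norm (hF $ n * (1/32) ^ n) = norm (hF $ n) * (1/32) ^ n" by (simp add: norm_mult norm_power)
      also have "\<dots> \<le> 16 ^ n * (1/32) ^ n" by (intro mult_right_mono hF_bound) simp
      also have "\<dots> = (1/2) ^ n" by (simp add: power_mult_distrib[symmetric])
      finally show "norm (hF $ n * (1/32) ^ n) \<le> (1/2) ^ n" .
    qed
    show "summable (\<lambda>n. (1/2::real) ^ n)" by (rule summable_geometric) simp
  qed
  then have "fps_conv_radius hF \<ge> norm (1/32 :: complex)"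
    unfolding fps_conv_radius_def by (rule conv_radius_geI)
  then show ?thesis by (rule less_le_trans[rotated]) simp
qed

lemma hfun_exp: "hfun has_fps_expansion hF"
  unfolding hfun_def by (rule eval_fps_has_fps_expansion[OF hF_radius])

lemma W_exp: "(\<lambda>x. x^2 / 16) has_fps_expansion Wf"
proof -
  have "(\<lambda>x::complex. (1/16) * x^2) has_fps_expansion fps_const (1/16) * fps_X^2"
    by (intro fps_expansion_intros)
  then show ?thesis unfolding Wf_def c16_def by (simp add: field_simps)
qed

lemma U_exp: "(\<lambda>x. x / (4 * (1 + x)^2)) has_fps_expansion Uf"
proof -
  have "(\<lambda>x::complex. (1/4) * x * (inverse (1 + x))^2) has_fps_expansion fps_const (1/4) * fps_X * (inverse (1 + fps_X))^2"
    by (intro fps_expansion_intros) simp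
  moreover have ev: "eventually (\<lambda>x. (1/4) * x * (inverse (1 + x))^2 = x / (4 * (1 + x)^2)) (nhds (0::complex))"
    by (simp add: field_simps)
  ultimately show ?thesis unfolding Uf_def c4_def qf_def
    using has_fps_expansion_cong[OF ev refl] by simp
qed

lemma V_exp: "(\<lambda>x. - x / (4 * (1 - x)^2)) has_fps_expansion Vf"
proof -
  have "(\<lambda>x::complex. - (1/4) * x * (inverse (1 - x))^2) has_fps_expansion - fps_const (1/4) * fps_X * (inverse (1 - fps_X))^2"
    by (intro fps_expansion_intros) simp
  moreover have ev: "eventually (\<lambda>x. - (1/4) * x * (inverse (1 - x))^2 = - x / (4 * (1 - x)^2)) (nhds (0::complex))"
    by (simp add: field_simps)
  ultimately show ?thesis unfolding Vf_def c4_def pf_def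
    using has_fps_expansion_cong[OF ev refl] by simp
qed

definition Qfun :: "complex \<Rightarrow> complex" where
  "Qfun x = - hfun (x^2 / 16) + hfun (x / (4 * (1 + x)^2)) + hfun (- x / (4 * (1 - x)^2))"

lemma Q_exp: "Qfun has_fps_expansion QF"
proof -
  have a: "(hfun \<circ> (\<lambda>x. x^2 / 16)) has_fps_expansion (hF oo Wf)"
    by (rule has_fps_expansion_compose[OF hfun_exp W_exp Wf0])
  have b: "(hfun \<circ> (\<lambda>x. x / (4 * (1 + x)^2))) has_fps_expansion (hF oo Uf)"
    by (rule has_fps_expansion_compose[OF hfun_exp U_exp Uf0])
  have c: "(hfun \<circ> (\<lambda>x. - x / (4 * (1 - x)^2))) has_fps_expansion (hF oo Vf)"
    by (rule has_fps_expansion_compose[OF hfun_exp V_exp Vf0])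
  have "(\<lambda>x. - (hfun \<circ> (\<lambda>x. x^2 / 16)) x + (hfun \<circ> (\<lambda>x. x / (4 * (1 + x)^2))) x
      + (hfun \<circ> (\<lambda>x. - x / (4 * (1 - x)^2))) x) has_fps_expansion - (hF oo Wf) + (hF oo Uf) + (hF oo Vf)"
    by (intro fps_expansion_intros a b c)
  then show ?thesis unfolding QF_def Qfun_def[abs_def] o_def .
qed

lemma Ln_slit: "cmod x < 1 \<Longrightarrow> 1 - x^2 \<notin> \<real>\<^sub>\<le>\<^sub>0"
proof -
  assume "cmod x < 1"
  then have "cmod (x^2) < 1" by (simp add: norm_power power_less_one_iff)
  then have "Re (x^2) < 1" using complex_Re_le_cmod[of "x^2"] by linarith
  then have "Re (1 - x^2) > 0" by simp
  then show "1 - x^2 \<notin> \<real>\<^sub>\<le>\<^sub>0"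
    by (metis Re_complex_of_real nonpos_Reals_cases not_le)
qed

lemma Ln_exp: "(\<lambda>x. Ln (1 - x^2)) has_fps_expansion QF"
proof -
  define f where "f = (\<lambda>x::complex. Ln (1 - x^2))"
  have hol: "f holomorphic_on ball 0 1"
    unfolding f_def by (intro holomorphic_intros) (auto intro!: Ln_slit)
  then have "f analytic_on {0}"
    by (meson analytic_on_open analytic_on_subset centre_in_ball empty_subsetI insert_subset open_ball zero_less_one)
  then have fexp: "f has_fps_expansion fps_expansion f 0" by (rule analytic_at_imp_has_fps_expansion_0)
  define LF where "LF = fps_expansion f 0"
  have dexp: "deriv f has_fps_expansion fps_deriv LF"
    unfolding LF_def by (rule has_fps_expansion_deriv[OF fexp])
  have ev: "eventually (\<lambda>x. - 2 * x * inverse (1 - x) * inverse (1 + x) = deriv f x) (nhds 0)"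
  proof -
    have "eventually (\<lambda>x. x \<in> ball (0::complex) 1) (nhds 0)" by (rule eventually_nhds_ball) simp
    then show ?thesis
    proof (rule eventually_mono)
      fix x :: complex assume "x \<in> ball 0 1"
      then have x1: "cmod x < 1" by simp
      have "(f has_field_derivative inverse (1 - x^2) * (- (2 * x))) (at x)"
        unfolding f_def using Ln_slit[OF x1]
        by (auto intro!: derivative_eq_intros has_field_derivative_Ln[THEN DERIV_chain2])
      then have "deriv f x = inverse (1 - x^2) * (- (2 * x))" by (rule DERIV_imp_deriv)
      moreover have "inverse (1 - x^2) = inverse (1 - x) * inverse (1 + x)"
        by (simp add: power2_eq_square algebra_simps flip: inverse_mult_distrib)
      ultimately show "- 2 * x * inverse (1 - x) * inverse (1 + x) = deriv f x" by simp
    qed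
  qed
  have gexp: "(\<lambda>x::complex. - 2 * x * inverse (1 - x) * inverse (1 + x)) has_fps_expansion - 2 * fps_X * pf * qf"
    unfolding pf_def qf_def by (intro fps_expansion_intros) simp_all
  then have "deriv f has_fps_expansion - 2 * fps_X * pf * qf"
    using has_fps_expansion_cong[OF ev refl] by simp
  then have dLF: "fps_deriv LF = fps_deriv QF"
    unfolding QF_deriv using fps_expansion_eqI[OF dexp] fps_expansion_eqI by metis
  have "LF $ 0 = f 0" unfolding LF_def using has_fps_expansion_imp_0_eq_fps_nth_0[OF fexp] by simp
  then have LF0: "LF $ 0 = 0" unfolding f_def by simp
  have "fps_deriv (LF - QF) = 0" using dLF by simp
  then have "LF - QF = fps_const ((LF - QF) $ 0)" by (simp only: fps_deriv_eq_0_iff)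
  then have "LF = QF" using LF0 QF0 by simp
  then show ?thesis using fexp unfolding LF_def f_def by simp
qed

lemma small_x: "\<exists>d>0. \<forall>x. cmod x < d \<longrightarrow> Qfun x = Ln (1 - x^2)"
proof -
  have "eventually (\<lambda>x. eval_fps QF x = Qfun x) (nhds 0)" using Q_exp by (simp add: has_fps_expansion_def)
  moreover have "eventually (\<lambda>x. eval_fps QF x = Ln (1 - x^2)) (nhds 0)" using Ln_exp by (simp add: has_fps_expansion_def)
  ultimately have "eventually (\<lambda>x. Qfun x = Ln (1 - x^2)) (nhds (0::complex))"
    by eventually_elim simp
  then show ?thesis unfolding eventually_nhds_metric by (simp add: dist_norm)
qed

lemma int_expk:
  fixes k :: int
  shows "((\<lambda>t. exp (t *\<^sub>R (2 * pi * \<i> * of_int k))) has_integral (if k = 0 then 1 else 0)) {0..1}"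
proof (cases "k = 0")
  case True
  then show ?thesis using has_integral_const_real[of "1::complex" 0 1] by simp
next
  case False
  define A where "A = 2 * pi * \<i> * (of_int k :: complex)"
  have A0: "A \<noteq> 0" using False by (simp add: A_def)
  have d: "((\<lambda>t. exp (t *\<^sub>R A) * inverse A) has_vector_derivative exp (t *\<^sub>R A)) (at t within {0..1})" for t
  proof -
    have "((\<lambda>t. exp (t *\<^sub>R A) * inverse A) has_vector_derivative exp (t *\<^sub>R A) * A * inverse A) (at t within {0..1})"
      by (intro has_vector_derivative_mult_left exp_scaleR_has_vector_derivative_right)
    then show ?thesis using A0 by (simp add: mult.assoc)
  qed
  have "((\<lambda>t. exp (t *\<^sub>R A)) has_integral (exp (1 *\<^sub>R A) * inverse A - exp (0 *\<^sub>R A) * inverse A)) {0..1}"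
    by (rule fundamental_theorem_of_calculus) (auto intro: d)
  moreover have "exp A = 1"
    using exp_integer_2pi[of "of_int k"] by (simp add: A_def mult_ac)
  ultimately show ?thesis using False by (simp add: A_def)
qed

lemma cos_as_exp: "complex_of_real (2 * cos (2 * pi * t)) = exp (t *\<^sub>R (2 * pi * \<i>)) + exp (t *\<^sub>R (2 * pi * \<i> * of_int (-1)))"
proof -
  have e1: "cos (complex_of_real (2 * pi * t)) = (exp (\<i> * complex_of_real (2 * pi * t)) + exp (- (\<i> * complex_of_real (2 * pi * t)))) / 2"
    by (simp only: cos_exp_eq)
  have "complex_of_real (2 * cos (2 * pi * t)) = exp (\<i> * complex_of_real (2 * pi * t)) + exp (- (\<i> * complex_of_real (2 * pi * t)))"
  proof -
    have "complex_of_real (2 * cos (2 * pi * t)) = 2 * cos (complex_of_real (2 * pi * t))"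
      by (subst cos_of_real) simp
    then show ?thesis using e1 by (simp add: mult.commute)
  qed
  then show ?thesis by (simp add: scaleR_conv_of_real mult_ac)
qed

lemma cos_pow_exp:
  "complex_of_real (2 * cos (2 * pi * t)) ^ j =
     (\<Sum>l\<le>j. of_nat (j choose l) * exp (t *\<^sub>R (2 * pi * \<i> * of_int (2 * int l - int j))))"
proof -
  have "complex_of_real (2 * cos (2 * pi * t)) ^ j = (exp (t *\<^sub>R (2 * pi * \<i>)) + exp (t *\<^sub>R (2 * pi * \<i> * of_int (-1)))) ^ j"
    by (simp only: cos_as_exp)
  also have "\<dots> = (\<Sum>l\<le>j. of_nat (j choose l) * exp (t *\<^sub>R (2 * pi * \<i>)) ^ l * exp (t *\<^sub>R (2 * pi * \<i> * of_int (-1))) ^ (j - l))"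
    by (rule binomial_ring)
  also have "\<dots> = (\<Sum>l\<le>j. of_nat (j choose l) * exp (t *\<^sub>R (2 * pi * \<i> * of_int (2 * int l - int j))))"
  proof (rule sum.cong[OF refl])
    fix l assume "l \<in> {..j}"
    then have lj: "l \<le> j" by simp
    have "exp (t *\<^sub>R (2 * pi * \<i>)) ^ l * exp (t *\<^sub>R (2 * pi * \<i> * of_int (-1))) ^ (j - l)
        = exp (of_nat l * (t *\<^sub>R (2 * pi * \<i>))) * exp (of_nat (j - l) * (t *\<^sub>R (2 * pi * \<i> * of_int (-1))))"
      by (simp only: exp_of_nat_mult)
    also have "\<dots> = exp (of_nat l * (t *\<^sub>R (2 * pi * \<i>)) + of_nat (j - l) * (t *\<^sub>R (2 * pi * \<i> * of_int (-1))))"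
      by (simp only: exp_add)
    also have "of_nat l * (t *\<^sub>R (2 * pi * \<i>)) + of_nat (j - l) * (t *\<^sub>R (2 * pi * \<i> * of_int (-1)))
        = t *\<^sub>R (2 * pi * \<i> * of_int (2 * int l - int j))"
      using lj by (simp add: scaleR_conv_of_real of_nat_diff algebra_simps)
    finally show "of_nat (j choose l) * exp (t *\<^sub>R (2 * pi * \<i>)) ^ l * exp (t *\<^sub>R (2 * pi * \<i> * of_int (-1))) ^ (j - l)
        = of_nat (j choose l) * exp (t *\<^sub>R (2 * pi * \<i> * of_int (2 * int l - int j)))"
      by (simp add: mult.assoc)
  qed
  finally show ?thesis .
qed

definition cmom :: "nat \<Rightarrow> complex" where
  "cmom j = (if even j then of_nat (j choose (j div 2)) else 0)"

lemma cos_pow_integral: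
  "((\<lambda>t. complex_of_real (2 * cos (2 * pi * t)) ^ j) has_integral cmom j) {0..1}"
proof -
  have "((\<lambda>t. \<Sum>l\<le>j. of_nat (j choose l) * exp (t *\<^sub>R (2 * pi * \<i> * of_int (2 * int l - int j))))
      has_integral (\<Sum>l\<le>j. of_nat (j choose l) * (if 2 * int l - int j = 0 then 1 else 0))) {0..1}"
    by (intro has_integral_sum has_integral_mult_right int_expk) auto
  moreover have "(\<Sum>l\<le>j. (of_nat (j choose l) :: complex) * (if 2 * int l - int j = 0 then 1 else 0)) = cmom j"
  proof -
    have "(\<Sum>l\<le>j. (of_nat (j choose l) :: complex) * (if 2 * int l - int j = 0 then 1 else 0))
        = (\<Sum>l\<le>j. if l = j div 2 \<and> even j then of_nat (j choose l) else 0)"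
      apply (rule sum.cong[OF refl])
      apply (auto elim!: evenE)
      by presburger
    also have "\<dots> = cmom j"
      by (auto simp: cmom_def)
    finally show ?thesis .
  qed
  ultimately show ?thesis unfolding cos_pow_exp by simp
qed

definition "acos2 x = complex_of_real (2 * cos (2 * pi * x))"

lemma cont_acos2_fst [continuous_intros]: "continuous_on (S :: (real \<times> real) set) (\<lambda>x. acos2 (fst x))"
  unfolding acos2_def by (intro continuous_intros)
lemma cont_acos2_snd [continuous_intros]: "continuous_on (S :: (real \<times> real) set) (\<lambda>x. acos2 (snd x))"
  unfolding acos2_def by (intro continuous_intros)
lemma cont_acos2 [continuous_intros]: "continuous_on S (\<lambda>x. acos2 x)"
  unfolding acos2_def by (intro continuous_intros)

lemma int1: "integral (cbox 0 1) (\<lambda>x. acos2 x ^ j) = cmom j"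
  using cos_pow_integral[of j] unfolding acos2_def box_real by (rule integral_unique)

lemma int1': "integral {0..1} (\<lambda>x. acos2 x ^ j) = cmom j"
  using int1 by (simp add: box_real)

lemma Tr_acos: "complex_of_real (Tr p) = acos2 (fst p) + acos2 (snd p)"
  unfolding Tr_def acos2_def by simp

lemma moment_integral:
  "integral (cbox (0::real,0::real) (1,1)) (\<lambda>p. complex_of_real (Tr p) ^ n)
     = (\<Sum>j\<le>n. of_nat (n choose j) * cmom j * cmom (n - j))"
proof -
  have e: "(\<lambda>p. complex_of_real (Tr p) ^ n) = (\<lambda>p. \<Sum>j\<le>n. of_nat (n choose j) * acos2 (fst p) ^ j * acos2 (snd p) ^ (n - j))"
    unfolding Tr_acos by (simp add: binomial_ring)
  have tm: "integral (cbox (0::real,0::real) (1,1)) (\<lambda>p. of_nat (n choose j) * acos2 (fst p) ^ j * acos2 (snd p) ^ (n - j))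
      = of_nat (n choose j) * cmom j * cmom (n - j)" for j
  proof -
    have "integral (cbox (0::real,0::real) (1,1)) (\<lambda>p. of_nat (n choose j) * acos2 (fst p) ^ j * acos2 (snd p) ^ (n - j))
      = integral (cbox 0 1) (\<lambda>x. integral (cbox 0 1) (\<lambda>y. of_nat (n choose j) * acos2 x ^ j * acos2 y ^ (n - j)))"
      by (subst integral_prod_continuous) (auto intro!: continuous_intros)
    also have "\<dots> = integral (cbox 0 1) (\<lambda>x. of_nat (n choose j) * acos2 x ^ j * cmom (n - j))"
      by (simp add: int1 int1')
    also have "\<dots> = of_nat (n choose j) * cmom j * cmom (n - j)"
      by (simp add: int1 int1' mult.assoc)
    finally show ?thesis .
  qed
  show ?thesis unfolding e
    by (subst integral_sum) (auto intro!: integrable_continuous continuous_intros simp: tm)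
qed

lemma trinom:
  assumes "i \<le> m"
  shows "(of_nat ((2*m) choose (2*i)) * of_nat ((2*i) choose i) * of_nat ((2*m - 2*i) choose (m - i)) :: complex)
       = of_nat ((2*m) choose m) * of_nat (m choose i) ^ 2"
proof -
  have a: "(of_nat ((2*m) choose (2*i)) :: complex) = fact (2*m) / (fact (2*i) * fact (2*m - 2*i))"
    using assms by (intro binomial_fact) simp
  have b: "(of_nat ((2*i) choose i) :: complex) = fact (2*i) / (fact i * fact i)"
    using binomial_fact[of i "2*i"] by simp
  have mi: "2*m - 2*i = 2*(m - i)" by simp
  have c: "(of_nat ((2*m - 2*i) choose (m - i)) :: complex) = fact (2*m - 2*i) / (fact (m - i) * fact (m - i))"
    unfolding mi using binomial_fact[of "m - i" "2*(m - i)"] by simp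
  have d: "(of_nat ((2*m) choose m) :: complex) = fact (2*m) / (fact m * fact m)"
    using binomial_fact[of m "2*m"] by simp
  have e: "(of_nat (m choose i) :: complex) = fact m / (fact i * fact (m - i))"
    using binomial_fact[of i m] assms by simp
  show ?thesis unfolding a b c d e by (simp add: field_simps power2_eq_square)
qed

lemma moment_value:
  "(\<Sum>j\<le>n. of_nat (n choose j) * cmom j * cmom (n - j)) = (if even n then acoef (n div 2) else 0)"
proof (cases "even n")
  case False
  have "of_nat (n choose j) * cmom j * cmom (n - j) = 0" if "j \<le> n" for j
    using False that by (cases "even j") (auto simp: cmom_def)
  then show ?thesis using False by (simp add: sum.neutral)
next
  case True
  then obtain m where n: "n = 2 * m" by (auto elim!: evenE)
  define f where "f j = (of_nat (n choose j) * cmom j * cmom (n - j) :: complex)" for j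
  have "(\<Sum>j\<le>n. f j) = (\<Sum>j\<in>(\<lambda>i. 2 * i) ` {..m}. f j)"
  proof (rule sum.mono_neutral_right)
    show "finite {..n}" by simp
    show "(\<lambda>i. 2 * i) ` {..m} \<subseteq> {..n}" using n by auto
    show "\<forall>j\<in>{..n} - (\<lambda>i. 2 * i) ` {..m}. f j = 0"
    proof
      fix j assume j: "j \<in> {..n} - (\<lambda>i. 2 * i) ` {..m}"
      have "odd j"
      proof
        assume "even j"
        then obtain i where "j = 2 * i" by (auto elim!: evenE)
        then show False using j n by auto
      qed
      then show "f j = 0" by (simp add: f_def cmom_def)
    qed
  qed
  also have "\<dots> = (\<Sum>i\<le>m. f (2 * i))"
    by (subst sum.reindex) (auto simp: inj_on_def)
  also have "\<dots> = (\<Sum>i\<le>m. of_nat ((2*m) choose m) * of_nat (m choose i) ^ 2)"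
  proof (rule sum.cong[OF refl])
    fix i assume "i \<in> {..m}"
    then have im: "i \<le> m" by simp
    have "2 * m - 2 * i = 2 * (m - i)" by simp
    then have "f (2 * i) = of_nat ((2*m) choose (2*i)) * of_nat ((2*i) choose i) * of_nat ((2*m - 2*i) choose (m - i))"
      unfolding f_def cmom_def n by simp
    then show "f (2 * i) = of_nat ((2*m) choose m) * of_nat (m choose i) ^ 2"
      using trinom[OF im] by simp
  qed
  also have "\<dots> = of_nat ((2*m) choose m) * of_nat (\<Sum>i\<le>m. (m choose i) ^ 2)"
    by (simp add: sum_distrib_left)
  also have "\<dots> = acoef m"
    unfolding choose_square_sum acoef_def by (simp add: power2_eq_square)
  finally show ?thesis using n unfolding f_def by simp
qed

lemma hF_sums:
  fixes z :: complex
  assumes "cmod z < 1/16"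
  shows "(\<lambda>m. hF $ m * z ^ m) sums hfun z"
proof -
  define r where "r = (cmod z + 1/16) / 2"
  have r: "cmod z < r" "r < 1/16" using assms by (auto simp: r_def)
  have rr0: "r \<ge> 0" using r(1) norm_ge_zero[of z] by linarith
  have "summable (\<lambda>n. hF $ n * (complex_of_real r) ^ n)"
  proof (rule summable_comparison_test)
    show "\<exists>N. \<forall>n\<ge>N. norm (hF $ n * (complex_of_real r) ^ n) \<le> (16 * r) ^ n"
    proof (intro exI allI impI)
      fix n :: nat
      have r0: "r \<ge> 0" using r(1) norm_ge_zero[of z] by linarith
      have "norm (hF $ n * (complex_of_real r) ^ n) = norm (hF $ n) * r ^ n"
        using r0 by (simp add: norm_mult norm_power)
      also have "\<dots> \<le> 16 ^ n * r ^ n" using r0 by (intro mult_right_mono hF_bound) simp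
      also have "\<dots> = (16 * r) ^ n" by (simp add: power_mult_distrib)
      finally show "norm (hF $ n * (complex_of_real r) ^ n) \<le> (16 * r) ^ n" .
    qed
    have "\<bar>16 * r\<bar> < 1" using r(2) rr0 by simp
    then show "summable (\<lambda>n. (16 * r) ^ n)" using summable_geometric[of "16 * r"] by simp
  qed
  then have "fps_conv_radius hF \<ge> norm (complex_of_real r)"
    unfolding fps_conv_radius_def by (rule conv_radius_geI)
  moreover have "norm (complex_of_real r) = r" using rr0 by simp
  ultimately have rad: "ereal r \<le> fps_conv_radius hF" by simp
  have "ereal (cmod z) < ereal r" using r(1) by simp
  then have "ereal (cmod z) < fps_conv_radius hF" using rad by (rule order_less_le_trans)
  then show ?thesis unfolding hfun_def by (rule sums_eval_fps)
qed

lemma sum_even_odd: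
  fixes f :: "nat \<Rightarrow> 'a::comm_monoid_add" and N :: nat
  shows "(\<Sum>i<2 * N. f i) = (\<Sum>m<N. f (2 * m) + f (2 * m + 1))"
  by (induction N) (simp_all add: algebra_simps)

lemma Hh_series:
  assumes c4: "cmod c > 4"
  shows "Hh c = - hfun (1 / c^2)"
proof -
  have c0: "c \<noteq> 0" using c4 by auto
  define g where "g i p = (-1)^Suc i / of_nat i * (complex_of_real (Tr p) / c) ^ i" for i p
  define rho where "rho = 4 / cmod c"
  have "0 < cmod c" using c4 by linarith
  then have rho: "0 \<le> rho" "rho < 1" using c4 unfolding rho_def by (simp_all add: divide_less_eq)
  have wb: "cmod (complex_of_real (Tr p) / c) \<le> rho" for p
    using Tr_bound[of p] c0 by (simp add: rho_def norm_divide divide_right_mono)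
  have wl: "cmod (complex_of_real (Tr p) / c) < 1" for p using wb[of p] rho by linarith
  have gb: "norm (g i p) \<le> rho ^ i" for i p
  proof -
    have n1: "norm ((-1)^Suc i / of_nat i :: complex) \<le> 1"
    proof (cases i)
      case 0 then show ?thesis by simp
    next
      case (Suc k)
      have "norm ((-1)^Suc i / of_nat i :: complex) = 1 / real i"
        by (simp add: norm_divide norm_power)
      also have "\<dots> \<le> 1" using Suc by simp
      finally show ?thesis .
    qed
    have n2: "norm ((complex_of_real (Tr p) / c) ^ i) \<le> rho ^ i"
      unfolding norm_power by (intro power_mono wb) simp
    have "norm (g i p) = norm ((-1)^Suc i / of_nat i :: complex) * norm ((complex_of_real (Tr p) / c) ^ i)"
      unfolding g_def by (simp only: norm_mult)
    also have "\<dots> \<le> 1 * rho ^ i" by (rule mult_mono[OF n1 n2]) simp_all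
    finally show ?thesis by simp
  qed
  have sums: "(\<lambda>i. g i p) sums Ln (1 + complex_of_real (Tr p) / c)" for p
    unfolding g_def using Ln_series[OF wl[of p]] by simp
  have ul: "uniform_limit (cbox (0::real,0::real) (1,1)) (\<lambda>n p. \<Sum>i<n. g i p) (\<lambda>p. suminf (\<lambda>i. g i p)) sequentially"
    by (rule Weierstrass_m_test[OF gb]) (use rho in \<open>simp add: summable_geometric\<close>)
  have sfun: "(\<lambda>p. suminf (\<lambda>i. g i p)) = (\<lambda>p. Ln (1 + complex_of_real (Tr p) / c))"
  proof (rule ext)
    fix p show "suminf (\<lambda>i. g i p) = Ln (1 + complex_of_real (Tr p) / c)"
      using sums_unique[OF sums[of p]] by simp
  qed
  define K where "K i = (-1)^Suc i / of_nat i * (1 / c) ^ i" for i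
  have gi: "g i = (\<lambda>p. K i * complex_of_real (Tr p) ^ i)" for i
    unfolding g_def K_def by (rule ext) (simp add: power_divide)
  have contg: "continuous_on (cbox (0::real,0::real) (1,1)) (\<lambda>p. \<Sum>i<n. g i p)" for n
    unfolding gi by (intro continuous_intros)
  obtain I J where I: "\<And>n. ((\<lambda>p. \<Sum>i<n. g i p) has_integral I n) (cbox (0,0) (1,1))"
    and J: "((\<lambda>p. Ln (1 + complex_of_real (Tr p) / c)) has_integral J) (cbox (0,0) (1,1))"
    and IJ: "I \<longlonglongrightarrow> J"
    by (rule uniform_limit_integral_cbox[OF ul[unfolded sfun] contg]) (simp | blast)+
  have HJ: "Hh c = J" unfolding Hh_def using J by (rule integral_unique)
  define b where "b i = (-1)^Suc i / of_nat i * (1 / c) ^ i * (if even i then acoef (i div 2) else 0)" for i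
  have Ib: "I n = (\<Sum>i<n. b i)" for n
  proof -
    have "I n = integral (cbox (0::real,0::real) (1,1)) (\<lambda>p. \<Sum>i<n. g i p)" using I[of n] by (simp add: integral_unique)
    also have "\<dots> = (\<Sum>i<n. integral (cbox (0::real,0::real) (1,1)) (g i))"
      by (rule integral_sum) (auto simp: gi intro!: integrable_continuous continuous_intros)
    also have "\<dots> = (\<Sum>i<n. b i)"
    proof (rule sum.cong[OF refl])
      fix i
      have "g i = (\<lambda>p. ((-1)^Suc i / of_nat i * (1 / c) ^ i) * complex_of_real (Tr p) ^ i)"
        unfolding gi K_def ..
      then show "integral (cbox (0::real,0::real) (1,1)) (g i) = b i"
        by (simp add: moment_integral moment_value b_def)
    qed
    finally show ?thesis .
  qed
  define z where "z = 1 / c^2"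
  have z: "cmod z < 1/16"
  proof -
    have "cmod c ^ 2 > 4 ^ 2" using c4 by (intro power_strict_mono) auto
    then show ?thesis by (simp add: z_def norm_divide norm_power divide_less_eq)
  qed
  have sub: "(\<lambda>N. I (2 * N)) \<longlonglongrightarrow> J"
    using LIMSEQ_subseq_LIMSEQ[OF IJ, of "\<lambda>N. 2 * N"] by (simp add: strict_mono_def o_def)
  have e2: "I (2 * N) = (\<Sum>m<N. - (hF $ m * z ^ m))" for N
  proof -
    have "I (2 * N) = (\<Sum>m<N. b (2 * m) + b (2 * m + 1))" unfolding Ib by (rule sum_even_odd)
    also have "\<dots> = (\<Sum>m<N. - (hF $ m * z ^ m))"
    proof (rule sum.cong[OF refl])
      fix m
      have "b (2 * m + 1) = 0" by (simp add: b_def)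
      moreover have "b (2 * m) = - (hF $ m * z ^ m)"
      proof (cases "m = 0")
        case True then show ?thesis by (simp add: b_def hF_def)
      next
        case False
        have e1: "(-1::complex)^Suc (2*m) = -1" by simp
        have e2: "(1/c)^(2*m) = z^m" unfolding z_def by (simp add: power_mult power_divide)
        have e3: "(of_nat (2 * m) :: complex) = 2 * of_nat m" by simp
        show ?thesis unfolding b_def e1 e2 using False by (simp add: hF_def e3)
      qed
      ultimately show "b (2 * m) + b (2 * m + 1) = - (hF $ m * z ^ m)" by simp
    qed
    finally show ?thesis .
  qed
  have "(\<lambda>N. \<Sum>m<N. - (hF $ m * z ^ m)) \<longlonglongrightarrow> - hfun z"
    using hF_sums[OF z] unfolding sums_def by (simp add: sum_negf tendsto_minus)
  then have "(\<lambda>N. I (2 * N)) \<longlonglongrightarrow> - hfun z" unfolding e2 .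
  with sub have "J = - hfun z" by (rule LIMSEQ_unique)
  then show ?thesis using HJ z_def by simp
qed

lemma ln_prod_eq:
  assumes "x > 0" "y > 0" "z > 0" "w > 0" "x * y = z * (w::real)"
  shows "ln x + ln y = ln z + ln w"
  using assms ln_mult[of x y] ln_mult[of z w] by simp

lemma big_Omega: assumes "cmod c > 4" shows "c \<in> Omega"
proof -
  have "c \<notin> complex_of_real ` {-4..4}"
  proof
    assume "c \<in> complex_of_real ` {-4..4}"
    then obtain r where "r \<in> {-4..4}" "c = complex_of_real r" by blast
    then have "cmod c \<le> 4" by (simp add: abs_le_iff)
    then show False using assms by simp
  qed
  then show ?thesis unfolding Omega_def by simp
qed

lemma joukowski_Omega:
  assumes "0 < cmod k" "cmod k < 1"
  shows "2 * (k + 1 / k) \<in> Omega"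
proof (rule ccontr)
  assume "2 * (k + 1 / k) \<notin> Omega"
  then obtain r where r: "r \<in> {-4..4}" "2 * (k + 1 / k) = complex_of_real r"
    unfolding Omega_def by auto
  have k0: "k \<noteq> 0" using assms by auto
  have "Im (k + 1 / k) = Im k * (1 - 1 / (cmod k)^2)"
    by (simp add: Im_divide algebra_simps cmod_power2 field_simps)
  moreover have "Im (k + 1 / k) = 0"
  proof -
    have "k + 1 / k = (2 * (k + 1 / k)) / 2" by simp
    also have "\<dots> = complex_of_real (r / 2)" by (subst r(2)) simp
    finally have "Im (k + 1 / k) = Im (complex_of_real (r / 2))" by (rule arg_cong)
    then show ?thesis by (simp only: Im_complex_of_real)
  qed
  moreover have "1 - 1 / (cmod k)^2 \<noteq> 0"
  proof -
    have "(cmod k)^2 < 1" using assms by (simp add: power_less_one_iff)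
    then show ?thesis using assms by (auto simp: field_simps)
  qed
  ultimately have "Im k = 0" by (metis mult_eq_0_iff)
  then obtain a where a: "k = complex_of_real a" by (metis complex_is_Real_iff Reals_cases)
  then have a0: "0 < \<bar>a\<bar>" "\<bar>a\<bar> < 1" using assms by auto
  have "complex_of_real (2 * (a + 1 / a)) = complex_of_real r" using r(2) a by simp
  then have ar: "2 * (a + 1 / a) = r" by (simp only: of_real_eq_iff)
  have agt: "\<bar>a + 1 / a\<bar> > 2"
  proof -
    have e1: "a + 1 / a = (a * a + 1) / a" using a0 by (simp add: field_simps)
    have e2: "\<bar>a * a + 1\<bar> = \<bar>a\<bar> * \<bar>a\<bar> + 1"
      by (metis abs_mult_self_eq abs_of_nonneg add_nonneg_nonneg zero_le_one zero_le_square)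
    have "\<bar>a + 1 / a\<bar> = (\<bar>a\<bar> * \<bar>a\<bar> + 1) / \<bar>a\<bar>" unfolding e1 abs_divide e2 ..
    also have "\<dots> = \<bar>a\<bar> + 1 / \<bar>a\<bar>" using a0 by (simp add: field_simps)
    finally have eqa: "\<bar>a + 1 / a\<bar> = \<bar>a\<bar> + 1 / \<bar>a\<bar>" .
    have gt: "\<bar>a\<bar> + 1 / \<bar>a\<bar> > 2"
    proof -
      have "(\<bar>a\<bar> - 1)^2 > 0" using a0 by auto
      then have "\<bar>a\<bar>^2 + 1 > 2 * \<bar>a\<bar>" by (simp add: power2_eq_square algebra_simps)
      then show ?thesis using a0 by (simp add: field_simps power2_eq_square)
    qed
    show ?thesis using eqa gt by simp
  qed
  have "\<bar>r\<bar> = 2 * \<bar>a + 1 / a\<bar>" unfolding ar[symmetric] abs_mult by simp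
  moreover have "2 * 2 < 2 * \<bar>a + 1 / a\<bar>" using agt by simp
  ultimately have "\<bar>r\<bar> > 4" by simp
  moreover have "\<bar>r\<bar> \<le> 4" using r(1) by (simp add: abs_le_iff)
  ultimately show False by linarith
qed

lemma joukowski_Omega2:
  assumes "0 < cmod k" "cmod k < 1"
  shows "2 * \<i> * (k - 1 / k) \<in> Omega"
proof -
  have "2 * \<i> * (k - 1 / k) = 2 * (\<i> * k + 1 / (\<i> * k))"
    using assms by (simp add: field_simps)
  moreover have "2 * (\<i> * k + 1 / (\<i> * k)) \<in> Omega"
    using assms by (intro joukowski_Omega) (auto simp: norm_mult)
  ultimately show ?thesis by simp
qed

lemma four_Omega:
  assumes "0 < cmod k" "cmod k < 1"
  shows "4 / k^2 \<in> Omega"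
proof (rule big_Omega)
  have "(cmod k)^2 < 1" using assms by (simp add: power_less_one_iff)
  then show "cmod (4 / k^2) > 4" using assms by (simp add: norm_divide norm_power field_simps)
qed

lemma recip_bound:
  fixes k :: complex
  assumes "0 < cmod k" "cmod k < 1/3"
  shows "cmod (2 * (k + 1 / k)) > 4"
proof -
  have "cmod (1 / k) = 1 / cmod k" by (simp add: norm_divide)
  also have "\<dots> > 3" using assms by (simp add: field_simps)
  finally have r3: "cmod (1 / k) > 3" .
  have "cmod (1 / k) \<le> cmod (k + 1 / k) + cmod k"
    using norm_triangle_ineq4[of "k + 1 / k" k] by simp
  then have "cmod (k + 1 / k) > 2" using r3 assms by linarith
  moreover have "cmod (2 * (k + 1 / k)) = 2 * cmod (k + 1 / k)" by (simp only: norm_mult norm_numeral)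
  ultimately show ?thesis by linarith
qed

lemma small_identity:
  "\<exists>e>0. \<forall>k. 0 < cmod k \<and> cmod k < e \<longrightarrow>
     Hh (4 / k^2) - Hh (2 * (k + 1 / k)) - Hh (2 * \<i> * (k - 1 / k)) = Ln (1 - k^4)"
proof -
  obtain d where d: "d > 0" "\<And>x. cmod x < d \<Longrightarrow> Qfun x = Ln (1 - x^2)"
    using small_x by blast
  define e where "e = min (1/3) d"
  have e: "e > 0" using d(1) by (simp add: e_def)
  have "Hh (4 / k^2) - Hh (2 * (k + 1 / k)) - Hh (2 * \<i> * (k - 1 / k)) = Ln (1 - k^4)"
    if k: "0 < cmod k" "cmod k < e" for k
  proof -
    have k3: "cmod k < 1/3" and kd: "cmod k < d" using k by (auto simp: e_def)
    have k1: "cmod k < 1" using k3 by simp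
    have k0: "k \<noteq> 0" using k by auto
    have c0: "cmod (4 / k^2) > 4" using four_Omega k1 k(1)
    proof -
      have "(cmod k)^2 < 1" using k1 k(1) by (simp add: power_less_one_iff)
      then show ?thesis using k(1) by (simp add: norm_divide norm_power field_simps)
    qed
    have c1: "cmod (2 * (k + 1 / k)) > 4" by (rule recip_bound[OF k(1) k3])
    have c2: "cmod (2 * \<i> * (k - 1 / k)) > 4"
    proof -
      have "2 * \<i> * (k - 1 / k) = 2 * (\<i> * k + 1 / (\<i> * k))" using k0 by (simp add: field_simps)
      moreover have "cmod (2 * (\<i> * k + 1 / (\<i> * k))) > 4"
        using k(1) k3 by (intro recip_bound) (auto simp: norm_mult)
      ultimately show ?thesis by simp
    qed
    have x: "cmod (k^2) < d"
    proof -
      have "cmod (k^2) = cmod k * cmod k" by (simp only: power2_eq_square norm_mult)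
      also have "\<dots> \<le> cmod k" using k1 by (simp add: mult_left_le)
      finally show ?thesis using kd by simp
    qed
    have q: "Qfun (k^2) = Ln (1 - k^4)" using d(2)[OF x] by (simp add: power_mult[symmetric])
    have e1: "1 / (4 / k^2)^2 = (k^2)^2 / 16" using k0 by (simp add: field_simps)
    have e2: "1 / (2 * (k + 1 / k))^2 = k^2 / (4 * (1 + k^2)^2)"
      using k0 by (simp add: field_simps power2_eq_square)
    have s3: "(2 * \<i> * (k - 1 / k))^2 = - (4 * (1 - k^2)^2) / k^2"
      using k0 by (simp add: field_simps power2_eq_square)
    have e3: "1 / (2 * \<i> * (k - 1 / k))^2 = - (k^2) / (4 * (1 - k^2)^2)"
      unfolding s3 by (simp add: minus_divide_left[symmetric])
    show ?thesis
      unfolding Hh_series[OF c0] Hh_series[OF c1] Hh_series[OF c2] e1 e2 e3 q[symmetric] Qfun_def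
      by simp
  qed
  then show ?thesis using e by blast
qed

lemma Dholo: "(\<lambda>k. Hh (4 / k^2) - Hh (2 * (k + 1 / k)) - Hh (2 * \<i> * (k - 1 / k))) holomorphic_on (ball 0 1 - {0})"
proof -
  have inS: "0 < cmod z \<and> cmod z < 1" if "z \<in> ball 0 1 - {0}" for z using that by auto
  have h1: "(\<lambda>k. Hh (4 / k^2)) holomorphic_on (ball 0 1 - {0})"
    by (rule holomorphic_on_compose_gen[OF _ Hh_holo, unfolded o_def]) (auto intro!: holomorphic_intros image_subsetI four_Omega simp del: divide_const_simps)
  have h2: "(\<lambda>k. Hh (2 * (k + 1 / k))) holomorphic_on (ball 0 1 - {0})"
  proof (rule holomorphic_on_compose_gen[OF _ Hh_holo, unfolded o_def])
    show "(\<lambda>k. 2 * (k + 1 / k)) holomorphic_on (ball 0 1 - {0})" by (auto intro!: holomorphic_intros)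
    show "(\<lambda>k. 2 * (k + 1 / k)) ` (ball 0 1 - {0}) \<subseteq> Omega"
    proof (rule image_subsetI)
      fix x :: complex assume "x \<in> ball 0 1 - {0}"
      then show "2 * (x + 1 / x) \<in> Omega" by (intro joukowski_Omega) auto
    qed
  qed
  have h3: "(\<lambda>k. Hh (2 * \<i> * (k - 1 / k))) holomorphic_on (ball 0 1 - {0})"
  proof (rule holomorphic_on_compose_gen[OF _ Hh_holo, unfolded o_def])
    show "(\<lambda>k. 2 * \<i> * (k - 1 / k)) holomorphic_on (ball 0 1 - {0})" by (auto intro!: holomorphic_intros)
    show "(\<lambda>k. 2 * \<i> * (k - 1 / k)) ` (ball 0 1 - {0}) \<subseteq> Omega"
    proof (rule image_subsetI)
      fix x :: complex assume "x \<in> ball 0 1 - {0}"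
      then show "2 * \<i> * (x - 1 / x) \<in> Omega" by (intro joukowski_Omega2) auto
    qed
  qed
  show ?thesis by (intro holomorphic_intros h1 h2 h3)
qed

lemma Lnholo: "(\<lambda>k. Ln (1 - k^4)) holomorphic_on (ball 0 1 - {0})"
proof (intro holomorphic_intros)
  fix z :: complex assume "z \<in> ball 0 1 - {0}"
  then have "cmod z < 1" by auto
  then have "cmod (z^4) < 1" by (simp add: norm_power power_less_one_iff)
  then have "Re (z^4) < 1" using complex_Re_le_cmod[of "z^4"] by linarith
  then have "Re (1 - z^4) > 0" by simp
  then show "1 - z^4 \<notin> \<real>\<^sub>\<le>\<^sub>0"
    by (metis Re_complex_of_real nonpos_Reals_cases not_le)
qed

lemma global_identity:
  assumes "0 < cmod k" "cmod k < 1"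
  shows "Hh (4 / k^2) - Hh (2 * (k + 1 / k)) - Hh (2 * \<i> * (k - 1 / k)) = Ln (1 - k^4)"
proof -
  obtain e where e: "e > 0" "\<And>k. 0 < cmod k \<Longrightarrow> cmod k < e \<Longrightarrow>
     Hh (4 / k^2) - Hh (2 * (k + 1 / k)) - Hh (2 * \<i> * (k - 1 / k)) = Ln (1 - k^4)"
    using small_identity by blast
  define s where "s = ball (0::complex) (min e 1) - {0}"
  have ne: "s \<noteq> {}"
  proof -
    have "complex_of_real (min e 1 / 2) \<in> s" using e(1) by (auto simp: s_def)
    then show ?thesis by auto
  qed
  show ?thesis
  proof (rule analytic_continuation_open[of s "ball 0 1 - {0}"
      "\<lambda>k. Hh (4 / k^2) - Hh (2 * (k + 1 / k)) - Hh (2 * \<i> * (k - 1 / k))" "\<lambda>k. Ln (1 - k^4)", OF _ _ ne _ _ Dholo Lnholo])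
    show "open s" unfolding s_def by auto
    show "open (ball (0::complex) 1 - {0})" by auto
    show "connected (ball (0::complex) 1 - {0})" by (simp add: connected_punctured_ball)
    show "s \<subseteq> ball 0 1 - {0}" unfolding s_def by auto
    show "k \<in> ball 0 1 - {0}" using assms by auto
    fix z assume "z \<in> s"
    then show "Hh (4 / z^2) - Hh (2 * (z + 1 / z)) - Hh (2 * \<i> * (z - 1 / z)) = Ln (1 - z^4)"
      by (intro e(2)) (auto simp: s_def)
  qed
qed

theorem mainTheorem5:
  fixes k :: complex
  assumes "0 < cmod k" and "cmod k < 1"
  shows "mahler2 (Pk (4 / k^2)) =
         mahler2 (Pk (2 * (k + 1 / k))) + mahler2 (Pk (2 * \<i> * (k - 1 / k)))"
proof -
  have k0: "k \<noteq> 0" using assms by auto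
  have nz: "1 - k^4 \<noteq> 0"
  proof
    assume "1 - k^4 = 0"
    then have "cmod (k^4) = 1" by (metis eq_iff_diff_eq_0 norm_one)
    moreover have "cmod (k^4) < 1" using assms by (simp add: norm_power power_less_one_iff)
    ultimately show False by simp
  qed
  have prod: "(2 * (k + 1 / k)) * (2 * \<i> * (k - 1 / k)) = - \<i> * (4 / k^2) * (1 - k^4)"
  proof -
    have "(2 * (k + 1 / k)) * (2 * \<i> * (k - 1 / k)) = 4 * \<i> * (k^2 - 1 / k^2)"
      using k0 by (simp add: algebra_simps power2_eq_square)
    also have "\<dots> = - \<i> * (4 / k^2) * (1 - k^4)"
      using k0 by (simp add: field_simps eval_nat_numeral)
    finally show ?thesis .
  qed
  have "cmod (2 * (k + 1 / k)) * cmod (2 * \<i> * (k - 1 / k)) = cmod (4 / k^2) * cmod (1 - k^4)"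
    using arg_cong[OF prod, of cmod] by (simp add: norm_mult norm_divide norm_power)
  moreover have "cmod (2 * (k + 1 / k)) > 0" "cmod (2 * \<i> * (k - 1 / k)) > 0" "cmod (4 / k^2) > 0"
    using Omega_nz0[OF joukowski_Omega[OF assms]] Omega_nz0[OF joukowski_Omega2[OF assms]] k0 by auto
  ultimately have L: "ln (cmod (2 * (k + 1 / k))) + ln (cmod (2 * \<i> * (k - 1 / k))) = ln (cmod (4 / k^2)) + ln (cmod (1 - k^4))"
    using nz by (intro ln_prod_eq) auto
  have "Re (Hh (4 / k^2) - Hh (2 * (k + 1 / k)) - Hh (2 * \<i> * (k - 1 / k))) = Re (Ln (1 - k^4))"
    by (rule arg_cong[OF global_identity[OF assms]])
  also have "\<dots> = ln (cmod (1 - k^4))" using nz by (rule Re_Ln)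
  finally have R: "Re (Hh (4 / k^2)) - Re (Hh (2 * (k + 1 / k))) - Re (Hh (2 * \<i> * (k - 1 / k))) = ln (cmod (1 - k^4))"
    by (simp only: minus_complex.sel)
  note M1 = mahler_Hh[OF four_Omega[OF assms]]
  note M2 = mahler_Hh[OF joukowski_Omega[OF assms]]
  note M3 = mahler_Hh[OF joukowski_Omega2[OF assms]]
  show ?thesis
    unfolding M1 M2 M3 using L R by linarith
qed

end
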